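(* Let $k\ge3$ and let $B$ be a bipartite graph with left vertex set $I$ and right vertex set $J$, left-regular of degree $k$ and with right degree $O(k)$. The graph $G=G(B)$ (constructed explicitly from $B$ as described in the context) has $O(k^4|I|)$ vertices and maximum vertex degree $O(k^2)$, and $G$ is $k$-colourable if and only if it is possible to map the pigeons $I$ to holes in $J$, each pigeon $i$ to a hole in $J_i$, in a one-to-one fashion, i.e., if and only if the equations $$\sum_{j\in J_i} p_{i,j}=1\ (i\in I),\qquad p_{i,j}p_{i,j'}=0\ (i\in I,\ j\neq j'\in J_i),\qquad p_{i,j}p_{i',j}=0\ (i\neq i'\in I,\ j\in J_i\cap J_{i'})$$ are simultaneously satisfiable over $\{0,1\}$.
   Context: $J_i$ is the set of $k$ neighbours of pigeon $i$ in $B$. Construction: for each pigeon $i$ fix an enumeration of its $k$ edges by $1,\dots,k$. For every pair of distinct pigeons $i\ne i'$ and $c,c'\in[k]$ such that the $c$th edge of $i$ and the $c'$th edge of $i'$ lead to the same hole, add a gadget: two disjoint $k$-cliques $l_1,\dots,l_k$ and $r_1,\dots,r_k$; edge $\{i,l_1\}$; a new vertex pre-coloured $c$ adjacent to $l_2,\dots,l_{k-1}$; edge $\{i',r_1\}$; a new vertex pre-coloured $c'$ adjacent to $r_2,\dots,r_{k-1}$; if $c=c'$ add edge $\{l_k,r_k\}$, otherwise identify $l_k$ with $r_k$. Pigeon vertices are shared among gadgets, all other vertices are new. Call the union $\widehat{G}$. Then take new vertices $z_1,\dots,z_M$ with $M=O(k^3|I|)$ large enough, and make every set of $k$ consecutive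 vertices $\{z_t,\dots,z_{t+k-1}\}$ a $k$-clique. Process the pre-coloured vertices of $\widehat{G}$ one by one: a vertex pre-coloured $c$ is identified with the first vertex $z_t$ with $t\equiv c \pmod k$ not yet used. The resulting graph, with no pre-colouring, is $G(B)$. $k$-colourable means having a map to $[k]$ with distinct colours on the endpoints of every edge. *)

theory Defs
  imports Main
begin

text \<open>Bipartite graph B: pigeons I (finite set of naturals), holes J, and the
neighbourhood J_i of pigeon i given by N i.  The enumeration of the k edges of
pigeon i is e i :: nat => nat (a bijection from {1..k} onto N i).\<close>

type_synonym gidx = "nat \<times> nat \<times> nat \<times> nat"

datatype vert =
    Pig nat
  | Lv gidx nat
  | Rv gidx nat
  | PLv gidx           \<comment> \<open>vertex pre-coloured c adjacent to l_2..l_(k-1)\<close>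
  | PRv gidx           \<comment> \<open>vertex pre-coloured c' adjacent to r_2..r_(k-1)\<close>
  | Zv nat

definition gadgets :: "nat set \<Rightarrow> (nat \<Rightarrow> nat \<Rightarrow> nat) \<Rightarrow> nat \<Rightarrow> gidx set" where
  "gadgets I e k = {(i, c, i', c'). i \<in> I \<and> i' \<in> I \<and> i \<noteq> i' \<and>
       c \<in> {1..k} \<and> c' \<in> {1..k} \<and> e i c = e i' c'}"

definition precol :: "nat set \<Rightarrow> (nat \<Rightarrow> nat \<Rightarrow> nat) \<Rightarrow> nat \<Rightarrow> vert set" where
  "precol I e k = PLv ` gadgets I e k \<union> PRv ` gadgets I e k"

fun pcol :: "vert \<Rightarrow> nat" where
  "pcol (PLv (i, c, i', c')) = c"
| "pcol (PRv (i, c, i', c')) = c'"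
| "pcol _ = 0"

text \<open>Number of z-vertices: M = k * (number of pre-coloured vertices), which is
O(k^3 |I|) and large enough.\<close>
definition Mz :: "nat set \<Rightarrow> (nat \<Rightarrow> nat \<Rightarrow> nat) \<Rightarrow> nat \<Rightarrow> nat" where
  "Mz I e k = k * card (precol I e k)"

text \<open>Processing the pre-coloured vertices in the order of the list os: a vertex
pre-coloured c goes to the first unused z_t with t = c (mod k), i.e. to
t = c + k * (number of earlier processed vertices of colour c).\<close>
definition zidx :: "nat \<Rightarrow> vert list \<Rightarrow> vert \<Rightarrow> nat" where
  "zidx k os v = pcol v + k * length (filter (\<lambda>u. pcol u = pcol v) (takeWhile (\<lambda>u. u \<noteq> v) os))"

text \<open>Identification map: r_k is identified with l_k when c ~= c'; pre-coloured
vertices are identified with z-vertices.\<close>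
fun collapse :: "nat \<Rightarrow> vert list \<Rightarrow> vert \<Rightarrow> vert" where
  "collapse k os (Rv (i, c, i', c') a) = (if c \<noteq> c' \<and> a = k then Lv (i, c, i', c') k else Rv (i, c, i', c') a)"
| "collapse k os (PLv g) = Zv (zidx k os (PLv g))"
| "collapse k os (PRv g) = Zv (zidx k os (PRv g))"
| "collapse k os v = v"

definition raw_verts :: "nat set \<Rightarrow> (nat \<Rightarrow> nat \<Rightarrow> nat) \<Rightarrow> nat \<Rightarrow> vert set" where
  "raw_verts I e k =
     Pig ` I
   \<union> {Lv g a | g a. g \<in> gadgets I e k \<and> a \<in> {1..k}}
   \<union> {Rv g a | g a. g \<in> gadgets I e k \<and> a \<in> {1..k}}
   \<union> precol I e k
   \<union> {Zv t | t. t \<in> {1..Mz I e k}}"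

definition gadget_edges :: "nat \<Rightarrow> gidx \<Rightarrow> (vert \<times> vert) set" where
  "gadget_edges k g = (case g of (i, c, i', c') \<Rightarrow>
       {(Lv g a, Lv g b) | a b. 1 \<le> a \<and> a < b \<and> b \<le> k}
     \<union> {(Rv g a, Rv g b) | a b. 1 \<le> a \<and> a < b \<and> b \<le> k}
     \<union> {(Pig i, Lv g 1)}
     \<union> {(PLv g, Lv g a) | a. 2 \<le> a \<and> a \<le> k - 1}
     \<union> {(Pig i', Rv g 1)}
     \<union> {(PRv g, Rv g a) | a. 2 \<le> a \<and> a \<le> k - 1}
     \<union> (if c = c' then {(Lv g k, Rv g k)} else {}))"

definition z_edges :: "nat \<Rightarrow> nat \<Rightarrow> (vert \<times> vert) set" where
  "z_edges k M = {(Zv a, Zv b) | a b t. 1 \<le> t \<and> t + k - 1 \<le> M \<and> t \<le> a \<and> a < b \<and> b \<le> t + k - 1}"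

definition raw_edges :: "nat set \<Rightarrow> (nat \<Rightarrow> nat \<Rightarrow> nat) \<Rightarrow> nat \<Rightarrow> (vert \<times> vert) set" where
  "raw_edges I e k = (\<Union>g \<in> gadgets I e k. gadget_edges k g) \<union> z_edges k (Mz I e k)"

text \<open>The graph G(B): vertices and (undirected, listed in one orientation) edges.\<close>
definition G_verts :: "nat set \<Rightarrow> (nat \<Rightarrow> nat \<Rightarrow> nat) \<Rightarrow> nat \<Rightarrow> vert list \<Rightarrow> vert set" where
  "G_verts I e k os = collapse k os ` raw_verts I e k"

definition G_edges :: "nat set \<Rightarrow> (nat \<Rightarrow> nat \<Rightarrow> nat) \<Rightarrow> nat \<Rightarrow> vert list \<Rightarrow> (vert \<times> vert) set" where
  "G_edges I e k os = (\<lambda>(u, v). (collapse k os u, collapse k os v)) ` raw_edges I e k"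

definition vdegree :: "(vert \<times> vert) set \<Rightarrow> vert \<Rightarrow> nat" where
  "vdegree E v = card {w. (v, w) \<in> E \<or> (w, v) \<in> E}"

definition k_colourable :: "nat \<Rightarrow> vert set \<Rightarrow> (vert \<times> vert) set \<Rightarrow> bool" where
  "k_colourable k V E \<longleftrightarrow> (\<exists>f :: vert \<Rightarrow> nat. (\<forall>v \<in> V. f v \<in> {1..k}) \<and> (\<forall>(u, v) \<in> E. f u \<noteq> f v))"

definition php_sat :: "nat set \<Rightarrow> (nat \<Rightarrow> nat set) \<Rightarrow> bool" where
  "php_sat I N \<longleftrightarrow> (\<exists>p :: nat \<Rightarrow> nat \<Rightarrow> int.
      (\<forall>i \<in> I. \<forall>j \<in> N i. p i j \<in> {0, 1})
    \<and> (\<forall>i \<in> I. (\<Sum>j \<in> N i. p i j) = 1)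
    \<and> (\<forall>i \<in> I. \<forall>j \<in> N i. \<forall>j' \<in> N i. j \<noteq> j' \<longrightarrow> p i j * p i j' = 0)
    \<and> (\<forall>i \<in> I. \<forall>i' \<in> I. \<forall>j \<in> N i \<inter> N i'. i \<noteq> i' \<longrightarrow> p i j * p i' j = 0))"

end

theory Submission
  imports Defs
begin


lemma clique_full:
  fixes h :: "nat \<Rightarrow> nat"
  assumes "inj_on h A" "h ` A \<subseteq> B" "finite B" "card A = card B" "finite A"
  shows "h ` A = B"
  using assms by (metis card_image card_subset_eq)

lemma clique_end:
  fixes h :: "nat \<Rightarrow> nat"
  assumes k: "k \<ge> 3" and inj: "inj_on h {1..k}" and sub: "h ` {1..k} \<subseteq> {1..k}"
    and x: "x \<in> {1..k}" and h1: "h 1 \<noteq> x" and hm: "\<forall>a. 2 \<le> a \<and> a \<le> k - 1 \<longrightarrow> h a \<noteq> x"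
  shows "h k = x"
proof -
  have "h ` {1..k} = {1..k}" using clique_full[OF inj sub] by simp
  with x obtain a where a: "a \<in> {1..k}" "h a = x" by (metis imageE)
  show ?thesis
  proof (cases "a = 1")
    case True then show ?thesis using a h1 by simp
  next
    case False
    then have "a = k" using hm a by (metis atLeastAtMost_iff le_antisym not_less_eq_eq Suc_leI le_diff_conv2 less_one linorder_neqE_nat one_add_one le_refl add_diff_cancel_right' le_add_diff_inverse2 linorder_not_le Suc_diff_1 One_nat_def) 
    then show ?thesis using a by simp
  qed
qed

lemma two_perm:
  assumes k: "k \<ge> 3" and u: "u \<in> {1..k}" and w: "w \<in> {1..k}" and uw: "u \<noteq> w"
  shows "\<exists>h::nat\<Rightarrow>nat. inj_on h {1..k} \<and> h ` {1..k} \<subseteq> {1..k} \<and> h 1 = u \<and> h k = w"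
proof -
  have c1: "card {2..k-1} = k - 2" by simp
  have c2: "card ({1..k} - {u,w}) = k - 2" using u w uw by (simp add: card_Diff_subset)
  obtain b where b: "bij_betw b {2..k-1} ({1..k} - {u,w})"
    using finite_same_card_bij[of "{2..k-1}" "{1..k} - {u,w}"] c1 c2 by auto
  define h where "h a = (if a = 1 then u else if a = k then w else b a)" for a
  have bi: "inj_on b {2..k-1}" and bs: "b ` {2..k-1} = {1..k} - {u,w}"
    using b by (auto simp: bij_betw_def)
  have "inj_on h {1..k}"
  proof (rule inj_onI)
    fix x y assume x: "x \<in> {1..k}" and y: "y \<in> {1..k}" and e: "h x = h y"
    have mx: "x \<noteq> 1 \<Longrightarrow> x \<noteq> k \<Longrightarrow> x \<in> {2..k-1}" using x by auto
    have my: "y \<noteq> 1 \<Longrightarrow> y \<noteq> k \<Longrightarrow> y \<in> {2..k-1}" using y by auto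
    have bx: "x \<noteq> 1 \<Longrightarrow> x \<noteq> k \<Longrightarrow> b x \<notin> {u,w}" using mx bs by blast
    have by': "y \<noteq> 1 \<Longrightarrow> y \<noteq> k \<Longrightarrow> b y \<notin> {u,w}" using my bs by blast
    show "x = y"
      using e mx my bx by' uw k inj_onD[OF bi, of x y] unfolding h_def
      by (auto split: if_splits)
  qed
  moreover have "h ` {1..k} \<subseteq> {1..k}"
  proof
    fix z assume "z \<in> h ` {1..k}"
    then obtain a where a: "a \<in> {1..k}" "z = h a" by auto
    show "z \<in> {1..k}"
    proof (cases "a = 1 \<or> a = k")
      case True then show ?thesis using a u w unfolding h_def by auto
    next
      case False
      then have "a \<in> {2..k-1}" using a by auto
      then have "b a \<in> {1..k}" using bs by blast
      then show ?thesis using False a unfolding h_def by auto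
    qed
  qed
  moreover have "h 1 = u" "h k = w" using k unfolding h_def by auto
  ultimately show ?thesis by blast
qed

lemma perm_exists:
  assumes k: "k \<ge> 3" and p: "p \<in> {1..k}" and c: "c \<in> {1..k}" and x: "x \<in> {1..k}"
    and ok: "x = c \<or> p \<noteq> c"
  shows "\<exists>h::nat\<Rightarrow>nat. inj_on h {1..k} \<and> h ` {1..k} \<subseteq> {1..k} \<and> h 1 \<noteq> p \<and> h k = x
     \<and> (\<forall>a. 2 \<le> a \<and> a \<le> k - 1 \<longrightarrow> h a \<noteq> c)"
proof (cases "x = c")
  case True
  have "card ({1..k} - {c,p}) \<ge> 1"
  proof -
    have "card {c,p} \<le> 2" by (simp add: card_insert_le_m1)
    then have "card ({1..k} - {c,p}) \<ge> k - 2" using diff_card_le_card_Diff[of "{c,p}" "{1..k}"] by simp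
    then show ?thesis using k by simp
  qed
  then obtain u where u: "u \<in> {1..k}" "u \<noteq> c" "u \<noteq> p"
    by (metis (no_types, lifting) Diff_iff card_0_eq empty_iff finite_Diff finite_atLeastAtMost insertCI not_one_le_zero subsetI subset_empty)
  obtain h where h: "inj_on h {1..k}" "h ` {1..k} \<subseteq> {1..k}" "h 1 = u" "h k = c"
    using two_perm[OF k u(1) c u(2)] by blast
  have "\<forall>a. 2 \<le> a \<and> a \<le> k - 1 \<longrightarrow> h a \<noteq> c"
  proof (intro allI impI)
    fix a assume "2 \<le> a \<and> a \<le> k - 1"
    then have "a \<in> {1..k}" "a \<noteq> k" using k by auto
    then show "h a \<noteq> c" using h(1,4) k by (metis atLeastAtMost_iff inj_on_contraD le_refl le_trans one_le_numeral)
  qed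
  then show ?thesis using h u True by auto
next
  case False
  then have pc: "p \<noteq> c" using ok by simp
  obtain h where h: "inj_on h {1..k}" "h ` {1..k} \<subseteq> {1..k}" "h 1 = c" "h k = x"
    using two_perm[OF k c x] False by metis
  have "\<forall>a. 2 \<le> a \<and> a \<le> k - 1 \<longrightarrow> h a \<noteq> c"
  proof (intro allI impI)
    fix a assume "2 \<le> a \<and> a \<le> k - 1"
    then have "a \<in> {1..k}" "a \<noteq> 1" using k by auto
    then show "h a \<noteq> c" using h(1,3) k by (metis atLeastAtMost_iff inj_on_contraD le_refl le_trans one_le_numeral)
  qed
  then show ?thesis using h pc by auto
qed



lemma takeWhile_len_less: "x \<in> set xs \<Longrightarrow> length (takeWhile (\<lambda>u. u \<noteq> x) xs) < length xs"
  by (induction xs) auto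

lemma pcol_precol: "x \<in> precol I e k \<Longrightarrow> pcol x \<in> {1..k}"
  unfolding precol_def gadgets_def by auto

lemma zidx_form: "\<exists>m. zidx k os x = pcol x + k * m"
  unfolding zidx_def by blast


lemma zidx_le:
  assumes "x \<in> set os" "pcol x \<le> k"
  shows "zidx k os x \<le> k * length os"
proof -
  define L where "L = length (filter (\<lambda>u. pcol u = pcol x) (takeWhile (\<lambda>u. u \<noteq> x) os))"
  have "L \<le> length (takeWhile (\<lambda>u. u \<noteq> x) os)"
    unfolding L_def by (rule length_filter_le)
  also have "\<dots> < length os" using takeWhile_len_less[OF assms(1)] .
  finally have "L + 1 \<le> length os" by simp
  then have "k * (L + 1) \<le> k * length os"
    by (rule mult_le_mono2)
  then have "k + k * L \<le> k * length os" by simp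
  moreover have "zidx k os x = pcol x + k * L" unfolding zidx_def L_def by simp
  ultimately show ?thesis using assms(2) by linarith
qed
lemma mod_form_inj:
  fixes a b k m1 m2 :: nat
  assumes "a \<in> {1..k}" "b \<in> {1..k}" "a + k * m1 = b + k * m2"
  shows "a = b \<and> m1 = m2"
proof -
  have A: "1 \<le> a" "a \<le> k" "1 \<le> b" "b \<le> k" using assms(1,2) by auto
  have "m1 = m2"
  proof (rule ccontr)
    assume "m1 \<noteq> m2"
    then consider "m1 + 1 \<le> m2" | "m2 + 1 \<le> m1" by linarith
    then show False
    proof cases
      case 1
      then have "k * (m1 + 1) \<le> k * m2" by (rule mult_le_mono2)
      then have "k * m1 + k \<le> k * m2" by (simp add: add_mult_distrib2)
      then show False using A assms(3) by linarith
    next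
      case 2
      then have "k * (m2 + 1) \<le> k * m1" by (rule mult_le_mono2)
      then have "k * m2 + k \<le> k * m1" by (simp add: add_mult_distrib2)
      then show False using A assms(3) by linarith
    qed
  qed
  then show ?thesis using assms(3) by simp
qed


lemma filter_count_lt:
  assumes "distinct os" "x \<in> set os" "y \<in> set os" "x \<noteq> y" "pcol x = pcol y"
  shows "length (filter (\<lambda>u. pcol u = pcol x) (takeWhile (\<lambda>u. u \<noteq> x) os))
       \<noteq> length (filter (\<lambda>u. pcol u = pcol y) (takeWhile (\<lambda>u. u \<noteq> y) os))"
proof -
  have key: "length (filter (\<lambda>u. pcol u = pcol a) (takeWhile (\<lambda>u. u \<noteq> a) os))
       < length (filter (\<lambda>u. pcol u = pcol b) (takeWhile (\<lambda>u. u \<noteq> b) os))"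
    if d: "distinct os" and ab: "os = xs @ a # ys" "b \<in> set ys" "pcol a = pcol b" for a b xs ys
  proof -
    have "a \<notin> set xs" "b \<notin> set xs" "a \<noteq> b" using d ab by auto
    then have t1: "takeWhile (\<lambda>u. u \<noteq> a) os = xs" using ab by (metis (mono_tags, lifting) append_Nil2 takeWhile.simps(2) takeWhile_append2)
    have "takeWhile (\<lambda>u. u \<noteq> b) (xs @ (a # ys)) = xs @ takeWhile (\<lambda>u. u \<noteq> b) (a # ys)"
      by (rule takeWhile_append2) (use \<open>b \<notin> set xs\<close> in blast)
    then have "takeWhile (\<lambda>u. u \<noteq> b) os = xs @ a # takeWhile (\<lambda>u. u \<noteq> b) ys"
      using ab \<open>a \<noteq> b\<close> by simp
    then show ?thesis using t1 ab(3) by simp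
  qed
  obtain xs ys where s: "os = xs @ x # ys" using assms(2) split_list by metis
  show ?thesis
  proof (cases "y \<in> set ys")
    case True
    show ?thesis using key[OF assms(1) s True assms(5)] by simp
  next
    case False
    then have "y \<in> set xs" using s assms(3,4) by auto
    then obtain as bs where "xs = as @ y # bs" using split_list by metis
    then have "os = as @ y # (bs @ x # ys)" "x \<in> set (bs @ x # ys)" using s by auto
    from key[OF assms(1) this assms(5)[symmetric]] show ?thesis by simp
  qed
qed

lemma zidx_inj:
  assumes "distinct os" "x \<in> set os" "y \<in> set os" "x \<noteq> y"
    "pcol x \<in> {1..k}" "pcol y \<in> {1..k}"
  shows "zidx k os x \<noteq> zidx k os y"
proof
  assume e: "zidx k os x = zidx k os y"
  then have "pcol x = pcol y \<and>
     length (filter (\<lambda>u. pcol u = pcol x) (takeWhile (\<lambda>u. u \<noteq> x) os))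
       = length (filter (\<lambda>u. pcol u = pcol y) (takeWhile (\<lambda>u. u \<noteq> y) os))"
    using mod_form_inj[OF assms(5,6)] unfolding zidx_def by blast
  then show False using filter_count_lt[OF assms(1-4)] by blast
qed



locale php_setup =
  fixes k :: nat and I J :: "nat set" and N :: "nat \<Rightarrow> nat set" and e :: "nat \<Rightarrow> nat \<Rightarrow> nat"
    and os :: "vert list" and d :: nat
  assumes k3: "k \<ge> 3" and finI: "finite I" and finJ: "finite J"
    and NJ: "\<forall>i \<in> I. N i \<subseteq> J \<and> card (N i) = k"
    and degJ: "\<forall>j \<in> J. card {i \<in> I. j \<in> N i} \<le> d * k"
    and bij: "\<forall>i \<in> I. bij_betw (e i) {1..k} (N i)"
    and dist: "distinct os" and setos: "set os = precol I e k"
begin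

abbreviation "gad \<equiv> gadgets I e k"
abbreviation "col \<equiv> collapse k os"
abbreviation "V \<equiv> G_verts I e k os"
abbreviation "E \<equiv> G_edges I e k os"
abbreviation "M \<equiv> Mz I e k"

lemma gad_iff: "(i, c, i', c') \<in> gad \<longleftrightarrow> i \<in> I \<and> i' \<in> I \<and> i \<noteq> i' \<and>
       c \<in> {1..k} \<and> c' \<in> {1..k} \<and> e i c = e i' c'"
  unfolding gadgets_def by simp

lemma e_in: "i \<in> I \<Longrightarrow> c \<in> {1..k} \<Longrightarrow> e i c \<in> N i"
  using bij unfolding bij_betw_def by blast

lemma e_inj: "i \<in> I \<Longrightarrow> c \<in> {1..k} \<Longrightarrow> c' \<in> {1..k} \<Longrightarrow> e i c = e i c' \<Longrightarrow> c = c'"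
  using bij unfolding bij_betw_def by (meson inj_onD)

lemma e_surj: assumes "i \<in> I" "j \<in> N i" shows "\<exists>c \<in> {1..k}. e i c = j"
proof -
  have "e i ` {1..k} = N i" using bij assms(1) by (simp add: bij_betw_def)
  then show ?thesis using assms(2) by force
qed

lemma finN: "i \<in> I \<Longrightarrow> finite (N i)"
  using NJ k3 by (metis card.infinite not_numeral_le_zero)

lemma fin_gad: "finite gad"
proof -
  have "gad \<subseteq> I \<times> {1..k} \<times> I \<times> {1..k}" unfolding gadgets_def by auto
  then show ?thesis using finI by (meson finite_SigmaI finite_atLeastAtMost finite_subset)
qed

lemma fin_precol: "finite (precol I e k)"
  unfolding precol_def using fin_gad by simp

lemma len_os: "length os = card (precol I e k)"
  using dist setos distinct_card by metis

lemma M_def': "M = k * length os" unfolding Mz_def len_os ..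

lemma raw_edge: "(x, y) \<in> raw_edges I e k \<Longrightarrow> (col x, col y) \<in> E"
  unfolding G_edges_def by force

lemma raw_vert: "x \<in> raw_verts I e k \<Longrightarrow> col x \<in> V"
  unfolding G_verts_def by blast

lemma gedge: "g \<in> gad \<Longrightarrow> (x, y) \<in> gadget_edges k g \<Longrightarrow> (x, y) \<in> raw_edges I e k"
  unfolding raw_edges_def by blast

lemma ge_L: "g \<in> gad \<Longrightarrow> 1 \<le> a \<Longrightarrow> a < b \<Longrightarrow> b \<le> k \<Longrightarrow> (Lv g a, Lv g b) \<in> raw_edges I e k"
  by (rule gedge) (auto simp: gadget_edges_def split: prod.splits)

lemma ge_R: "g \<in> gad \<Longrightarrow> 1 \<le> a \<Longrightarrow> a < b \<Longrightarrow> b \<le> k \<Longrightarrow> (Rv g a, Rv g b) \<in> raw_edges I e k"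
  by (rule gedge) (auto simp: gadget_edges_def split: prod.splits)

lemma ge_PL: "(i, c, i', c') \<in> gad \<Longrightarrow> (Pig i, Lv (i, c, i', c') 1) \<in> raw_edges I e k"
  by (rule gedge) (auto simp: gadget_edges_def)

lemma ge_PR: "(i, c, i', c') \<in> gad \<Longrightarrow> (Pig i', Rv (i, c, i', c') 1) \<in> raw_edges I e k"
  by (rule gedge) (auto simp: gadget_edges_def)

lemma ge_CL: "g \<in> gad \<Longrightarrow> 2 \<le> a \<Longrightarrow> a \<le> k - 1 \<Longrightarrow> (PLv g, Lv g a) \<in> raw_edges I e k"
  by (rule gedge) (auto simp: gadget_edges_def split: prod.splits)

lemma ge_CR: "g \<in> gad \<Longrightarrow> 2 \<le> a \<Longrightarrow> a \<le> k - 1 \<Longrightarrow> (PRv g, Rv g a) \<in> raw_edges I e k"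
  by (rule gedge) (auto simp: gadget_edges_def split: prod.splits)

lemma ge_LR: "(i, c, i', c) \<in> gad \<Longrightarrow> (Lv (i, c, i', c) k, Rv (i, c, i', c) k) \<in> raw_edges I e k"
  by (rule gedge) (auto simp: gadget_edges_def)

lemma ze: "1 \<le> t \<Longrightarrow> t + k - 1 \<le> M \<Longrightarrow> t \<le> a \<Longrightarrow> a < b \<Longrightarrow> b \<le> t + k - 1 \<Longrightarrow>
    (Zv a, Zv b) \<in> raw_edges I e k"
  unfolding raw_edges_def z_edges_def by blast

lemma rv_Pig: "i \<in> I \<Longrightarrow> Pig i \<in> raw_verts I e k"
  unfolding raw_verts_def by blast
lemma rv_L: "g \<in> gad \<Longrightarrow> a \<in> {1..k} \<Longrightarrow> Lv g a \<in> raw_verts I e k"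
  unfolding raw_verts_def by blast
lemma rv_R: "g \<in> gad \<Longrightarrow> a \<in> {1..k} \<Longrightarrow> Rv g a \<in> raw_verts I e k"
  unfolding raw_verts_def by blast
lemma rv_Z: "t \<in> {1..M} \<Longrightarrow> Zv t \<in> raw_verts I e k"
  unfolding raw_verts_def by blast

lemma precol_zidx:
  assumes "x \<in> precol I e k"
  shows "\<exists>m. zidx k os x = pcol x + k * m \<and> pcol x \<in> {1..k} \<and> zidx k os x \<le> M"
  using zidx_form[of k os x] pcol_precol[OF assms] zidx_le[of x os k] assms setos M_def' by auto

lemma col_precol: "x \<in> precol I e k \<Longrightarrow> col x = Zv (zidx k os x)"
  unfolding precol_def by auto

lemma M_ge: "gad \<noteq> {} \<Longrightarrow> k \<le> M"
proof -
  assume "gad \<noteq> {}"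
  then have "precol I e k \<noteq> {}" unfolding precol_def by auto
  then have "card (precol I e k) \<ge> 1" using fin_precol by (simp add: Suc_leI card_gt_0_iff)
  then show ?thesis unfolding Mz_def by simp
qed

end


context php_setup begin

lemma col_to_php:
  assumes fV: "\<forall>v \<in> V. f v \<in> {1..k}" and fE: "\<forall>(u, v) \<in> E. f u \<noteq> f v"
  shows "php_sat I N"
proof -
  have fe: "f (col x) \<noteq> f (col y)" if "(x, y) \<in> raw_edges I e k" for x y
    using fE raw_edge[OF that] by blast
  have fv: "f (col x) \<in> {1..k}" if "x \<in> raw_verts I e k" for x
    using fV raw_vert[OF that] by blast
  have k0: "k > 0" using k3 by simp
  have win_inj: "inj_on (\<lambda>a. f (Zv a)) {t..t+k-1}" if t: "1 \<le> t" "t + k - 1 \<le> M" for t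
  proof (rule inj_onI)
    fix a b assume a: "a \<in> {t..t+k-1}" and b: "b \<in> {t..t+k-1}" and ab: "f (Zv a) = f (Zv b)"
    show "a = b"
    proof (rule ccontr)
      assume "a \<noteq> b"
      then consider "a < b" | "b < a" by linarith
      then show False
      proof cases
        case 1 then show False using fe[OF ze[OF t, of a b]] a b ab by simp
      next
        case 2 then show False using fe[OF ze[OF t, of b a]] a b ab by simp
      qed
    qed
  qed
  have win_sub: "(\<lambda>a. f (Zv a)) ` {t..t+k-1} \<subseteq> {1..k}" if t: "1 \<le> t" "t + k - 1 \<le> M" for t
  proof
    fix z assume "z \<in> (\<lambda>a. f (Zv a)) ` {t..t+k-1}"
    then obtain a where a: "a \<in> {t..t+k-1}" "z = f (Zv a)" by blast
    have zr: "Zv a \<in> raw_verts I e k" using t a by (intro rv_Z) auto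
    show "z \<in> {1..k}" using fv[OF zr] a by simp
  qed
  have win_full: "(\<lambda>a. f (Zv a)) ` {t..t+k-1} = {1..k}" if t: "1 \<le> t" "t + k - 1 \<le> M" for t
    by (rule clique_full[OF win_inj[OF t] win_sub[OF t]]) (use t k0 in auto)
  have shift: "f (Zv (t + k)) = f (Zv t)" if t: "1 \<le> t" "t + k \<le> M" for t
  proof -
    have t': "1 \<le> t" "t + k - 1 \<le> M" using t by auto
    have zr: "Zv (t + k) \<in> raw_verts I e k" using t by (intro rv_Z) auto
    have "f (Zv (t + k)) \<in> {1..k}" using fv[OF zr] by simp
    then obtain s where s: "s \<in> {t..t+k-1}" "f (Zv (t + k)) = f (Zv s)"
      using win_full[OF t'] by (metis (no_types, lifting) imageE)
    show ?thesis
    proof (cases "s = t")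
      case True then show ?thesis using s by simp
    next
      case False
      then have "t + 1 \<le> s" "s < t + k" using s k0 by auto
      then have zr: "(Zv s, Zv (t + k)) \<in> raw_edges I e k"
        using t k0 by (intro ze[of "t + 1"]) auto
      show ?thesis using fe[OF zr] s by simp
    qed
  qed
  have period: "f (Zv (c + k * m)) = f (Zv c)" if "c \<in> {1..k}" "c + k * m \<le> M" for c m
    using that
  proof (induction m)
    case 0 then show ?case by simp
  next
    case (Suc m)
    have "f (Zv (c + k * m + k)) = f (Zv (c + k * m))"
      using Suc.prems by (intro shift) (auto simp: algebra_simps)
    moreover have "f (Zv (c + k * m)) = f (Zv c)" using Suc by (auto simp: algebra_simps)
    ultimately show ?case by (simp add: algebra_simps)
  qed
  define \<pi> where "\<pi> c = (if gad = {} then c else f (Zv c))" for c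
  have pi_inj: "inj_on \<pi> {1..k}" and pi_full: "\<pi> ` {1..k} = {1..k}"
  proof -
    have "inj_on \<pi> {1..k} \<and> \<pi> ` {1..k} = {1..k}"
    proof (cases "gad = {}")
      case True then show ?thesis unfolding \<pi>_def by simp
    next
      case False
      then have t: "1 \<le> (1::nat)" "1 + k - 1 \<le> M" using M_ge by auto
      have "\<pi> = (\<lambda>a. f (Zv a))" using False unfolding \<pi>_def by auto
      then show ?thesis using win_inj[OF t] win_full[OF t] by simp
    qed
    then show "inj_on \<pi> {1..k}" "\<pi> ` {1..k} = {1..k}" by auto
  qed
  have pi_pre: "f (col x) = \<pi> (pcol x)" if x: "x \<in> precol I e k" for x
  proof -
    obtain m where m: "zidx k os x = pcol x + k * m" "pcol x \<in> {1..k}" "zidx k os x \<le> M"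
      using precol_zidx[OF x] by blast
    have "gad \<noteq> {}" using x unfolding precol_def by auto
    then show ?thesis using period[OF m(2)] m col_precol[OF x] unfolding \<pi>_def by simp
  qed
  have side: "h k = x" if h: "\<forall>a b. 1 \<le> a \<and> a < b \<and> b \<le> k \<longrightarrow> h a \<noteq> h b"
      "\<forall>a \<in> {1..k}. h a \<in> {1..k}" "x \<in> {1..k}" "h 1 \<noteq> x"
      "\<forall>a. 2 \<le> a \<and> a \<le> k - 1 \<longrightarrow> h a \<noteq> x" for h :: "nat \<Rightarrow> nat" and x
  proof (rule clique_end[OF k3 _ _ h(3,4,5)])
    show "inj_on h {1..k}"
    proof (rule inj_onI)
      fix a b assume "a \<in> {1..k}" "b \<in> {1..k}" "h a = h b"
      then show "a = b" using h(1) by (metis atLeastAtMost_iff linorder_neqE_nat)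
    qed
    show "h ` {1..k} \<subseteq> {1..k}" using h(2) by blast
  qed
  have gadL: "f (col (Lv g k)) = \<pi> c" if g: "g = (i, c, i', c')" "g \<in> gad" and p: "f (Pig i) = \<pi> c"
    for g i c i' c'
  proof (rule side[where h = "\<lambda>a. f (col (Lv g a))"])
    show "\<forall>a b. 1 \<le> a \<and> a < b \<and> b \<le> k \<longrightarrow> f (col (Lv g a)) \<noteq> f (col (Lv g b))"
      using fe ge_L[OF g(2)] by blast
    show "\<forall>a\<in>{1..k}. f (col (Lv g a)) \<in> {1..k}" using fv rv_L[OF g(2)] by blast
    have c: "c \<in> {1..k}" using g gad_iff by auto
    then show "\<pi> c \<in> {1..k}" using pi_full by blast
    show "f (col (Lv g 1)) \<noteq> \<pi> c" using fe[OF ge_PL[OF g(2)[unfolded g(1)]]] p g(1) by simp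
    have pr: "PLv g \<in> precol I e k" using g(2) unfolding precol_def by blast
    have "f (col (PLv g)) = \<pi> c" using pi_pre[OF pr] g(1) by simp
    then show "\<forall>a. 2 \<le> a \<and> a \<le> k - 1 \<longrightarrow> f (col (Lv g a)) \<noteq> \<pi> c"
      using fe ge_CL[OF g(2)] by metis
  qed
  have gadR: "f (col (Rv g k)) = \<pi> c'" if g: "g = (i, c, i', c')" "g \<in> gad" and p: "f (Pig i') = \<pi> c'"
    for g i c i' c'
  proof (rule side[where h = "\<lambda>a. f (col (Rv g a))"])
    show "\<forall>a b. 1 \<le> a \<and> a < b \<and> b \<le> k \<longrightarrow> f (col (Rv g a)) \<noteq> f (col (Rv g b))"
      using fe ge_R[OF g(2)] by blast
    show "\<forall>a\<in>{1..k}. f (col (Rv g a)) \<in> {1..k}" using fv rv_R[OF g(2)] by blast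
    have c: "c' \<in> {1..k}" using g gad_iff by auto
    then show "\<pi> c' \<in> {1..k}" using pi_full by blast
    have "col (Rv g 1) = Rv g 1" using g(1) k3 by simp
    then show "f (col (Rv g 1)) \<noteq> \<pi> c'" using fe[OF ge_PR[OF g(2)[unfolded g(1)]]] p g(1) by simp
    have pr: "PRv g \<in> precol I e k" using g(2) unfolding precol_def by blast
    have "f (col (PRv g)) = \<pi> c'" using pi_pre[OF pr] g(1) by simp
    then show "\<forall>a. 2 \<le> a \<and> a \<le> k - 1 \<longrightarrow> f (col (Rv g a)) \<noteq> \<pi> c'"
      using fe ge_CR[OF g(2)] by metis
  qed
  have no_conf: False if g: "(i, c, i', c') \<in> gad" "f (Pig i) = \<pi> c" "f (Pig i') = \<pi> c'" for i c i' c'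
  proof -
    have L: "f (Lv (i, c, i', c') k) = \<pi> c" using gadL[OF refl g(1,2)] by simp
    have R: "f (col (Rv (i, c, i', c') k)) = \<pi> c'" using gadR[OF refl g(1,3)] .
    show False
    proof (cases "c = c'")
      case True
      then show False using fe[OF ge_LR[of i c i']] g(1) L R by simp
    next
      case False
      have "c \<in> {1..k}" "c' \<in> {1..k}" using g(1) gad_iff by auto
      then have "\<pi> c \<noteq> \<pi> c'" using False pi_inj by (meson inj_on_contraD)
      then show False using L R False by simp
    qed
  qed
  define \<sigma> where "\<sigma> i = (SOME c. c \<in> {1..k} \<and> \<pi> c = f (Pig i))" for i
  have sig: "\<sigma> i \<in> {1..k} \<and> \<pi> (\<sigma> i) = f (Pig i)" if i: "i \<in> I" for i
  proof -
    have "f (Pig i) \<in> {1..k}" using fv[OF rv_Pig[OF i]] by simp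
    then have "\<exists>c. c \<in> {1..k} \<and> \<pi> c = f (Pig i)" using pi_full by (metis imageE)
    then show ?thesis unfolding \<sigma>_def by (rule someI_ex)
  qed
  define p :: "nat \<Rightarrow> nat \<Rightarrow> int" where "p i j = (if j = e i (\<sigma> i) then 1 else 0)" for i j
  show ?thesis
    unfolding php_sat_def
  proof (intro exI[of _ p] conjI ballI impI)
    fix i j assume "i \<in> I" "j \<in> N i"
    show "p i j \<in> {0, 1}" unfolding p_def by simp
  next
    fix i assume i: "i \<in> I"
    have "e i (\<sigma> i) \<in> N i" using e_in[OF i] sig[OF i] by blast
    then show "(\<Sum>j \<in> N i. p i j) = 1" unfolding p_def using finN[OF i] by simp
  next
    fix i j j' assume "i \<in> I" "j \<in> N i" "j' \<in> N i" "j \<noteq> j'"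
    then show "p i j * p i j' = 0" unfolding p_def by simp
  next
    fix i i' j assume i: "i \<in> I" and i': "i' \<in> I" and j: "j \<in> N i \<inter> N i'" and ii: "i \<noteq> i'"
    show "p i j * p i' j = 0"
    proof (rule ccontr)
      assume "p i j * p i' j \<noteq> 0"
      then have "j = e i (\<sigma> i)" "j = e i' (\<sigma> i')" unfolding p_def by (auto split: if_splits)
      then have "(i, \<sigma> i, i', \<sigma> i') \<in> gad" using gad_iff i i' ii sig[OF i] sig[OF i'] by simp
      then show False using no_conf sig[OF i] sig[OF i'] by metis
    qed
  qed
qed

end


lemma mod_window: "(x::nat) < y \<Longrightarrow> y < x + k \<Longrightarrow> x mod k \<noteq> y mod k"
proof
  assume a: "x < y" "y < x + k" "x mod k = y mod k"
  then have "k dvd (y - x)" by (metis mod_eq_dvd_iff_nat less_imp_le_nat)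
  moreover have "0 < y - x" "y - x < k" using a by auto
  ultimately show False using nat_dvd_not_less by blast
qed

lemma mod_pre: "c \<in> {1..k} \<Longrightarrow> ((c + k * m) - 1) mod k + 1 = (c::nat)"
proof -
  assume c: "c \<in> {1..k}"
  then have "(c + k * m) - 1 = (c - 1) + k * m" by auto
  then have "((c + k * m) - 1) mod k = (c - 1) mod k" by simp
  also have "\<dots> = c - 1" using c by auto
  finally show ?thesis using c by auto
qed

context php_setup begin

lemma gedge_cases:
  assumes g: "g = (i, c, i', c')" and m: "(x, y) \<in> gadget_edges k g"
  obtains (LL) a b where "x = Lv g a" "y = Lv g b" "1 \<le> a" "a < b" "b \<le> k"
    | (RR) a b where "x = Rv g a" "y = Rv g b" "1 \<le> a" "a < b" "b \<le> k"
    | (PL) "x = Pig i" "y = Lv g 1"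
    | (CL) a where "x = PLv g" "y = Lv g a" "2 \<le> a" "a \<le> k - 1"
    | (PR) "x = Pig i'" "y = Rv g 1"
    | (CR) a where "x = PRv g" "y = Rv g a" "2 \<le> a" "a \<le> k - 1"
    | (LR) "c = c'" "x = Lv g k" "y = Rv g k"
  using m unfolding g gadget_edges_def by (auto split: if_splits)

lemma raw_edge_cases:
  assumes "(x, y) \<in> raw_edges I e k"
  obtains (G) g where "g \<in> gad" "(x, y) \<in> gadget_edges k g"
    | (Z) a b t where "x = Zv a" "y = Zv b" "1 \<le> t" "t + k - 1 \<le> M" "t \<le> a" "a < b" "b \<le> t + k - 1"
  using assms unfolding raw_edges_def z_edges_def by blast

lemma raw_vert_cases:
  assumes "x \<in> raw_verts I e k"
  obtains (P) i where "x = Pig i" "i \<in> I"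
    | (L) g a where "x = Lv g a" "g \<in> gad" "a \<in> {1..k}"
    | (R) g a where "x = Rv g a" "g \<in> gad" "a \<in> {1..k}"
    | (C) "x \<in> precol I e k"
    | (Z) t where "x = Zv t"
  using assms unfolding raw_verts_def by blast

definition permP :: "nat \<Rightarrow> nat \<Rightarrow> nat \<Rightarrow> (nat \<Rightarrow> nat) \<Rightarrow> bool" where
  "permP p c x h \<longleftrightarrow> inj_on h {1..k} \<and> h ` {1..k} \<subseteq> {1..k} \<and> h 1 \<noteq> p \<and> h k = x
     \<and> (\<forall>a. 2 \<le> a \<and> a \<le> k - 1 \<longrightarrow> h a \<noteq> c)"

lemma permP_ex: "p \<in> {1..k} \<Longrightarrow> c \<in> {1..k} \<Longrightarrow> x \<in> {1..k} \<Longrightarrow> x = c \<or> p \<noteq> c \<Longrightarrow> permP p c x (SOME h. permP p c x h)"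
  unfolding permP_def using perm_exists[OF k3] by (rule someI_ex) 

lemma php_to_col:
  assumes "php_sat I N"
  shows "k_colourable k V E"
proof -
  obtain p :: "nat \<Rightarrow> nat \<Rightarrow> int" where
    p01: "\<forall>i \<in> I. \<forall>j \<in> N i. p i j \<in> {0, 1}" and
    psum: "\<forall>i \<in> I. (\<Sum>j \<in> N i. p i j) = 1" and
    pconf: "\<forall>i \<in> I. \<forall>i' \<in> I. \<forall>j \<in> N i \<inter> N i'. i \<noteq> i' \<longrightarrow> p i j * p i' j = 0"
    using assms unfolding php_sat_def by blast
  have hole: "\<exists>j \<in> N i. p i j = 1" if i: "i \<in> I" for i
  proof (rule ccontr)
    assume "\<not> ?thesis"
    then have "\<forall>j \<in> N i. p i j = 0" using p01 i by blast
    then have "(\<Sum>j \<in> N i. p i j) = 0" by simp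
    then show False using psum i by simp
  qed
  define \<sigma> where "\<sigma> i = (SOME c. c \<in> {1..k} \<and> p i (e i c) = 1)" for i
  have sig: "\<sigma> i \<in> {1..k} \<and> p i (e i (\<sigma> i)) = 1" if i: "i \<in> I" for i
  proof -
    obtain j where j: "j \<in> N i" "p i j = 1" using hole[OF i] by blast
    obtain c where "c \<in> {1..k}" "e i c = j" using e_surj[OF i j(1)] by blast
    then have "\<exists>c. c \<in> {1..k} \<and> p i (e i c) = 1" using j by blast
    then show ?thesis unfolding \<sigma>_def by (rule someI_ex)
  qed
  have noconf: False if g: "(i, c, i', c') \<in> gad" "\<sigma> i = c" "\<sigma> i' = c'" for i c i' c'
  proof -
    have gi: "i \<in> I" "i' \<in> I" "i \<noteq> i'" "c \<in> {1..k}" "c' \<in> {1..k}" "e i c = e i' c'"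
      using g(1) gad_iff by auto
    have "e i c \<in> N i" using e_in[OF gi(1) gi(4)] .
    moreover have "e i' c' \<in> N i'" using e_in[OF gi(2) gi(5)] .
    ultimately have "e i c \<in> N i \<inter> N i'" using gi(6) by simp
    then have "p i (e i c) * p i' (e i c) = 0" using pconf gi by blast
    moreover have "p i (e i c) = 1" using sig[OF gi(1)] g(2) by simp
    moreover have "p i' (e i' c') = 1" using sig[OF gi(2)] g(3) by simp
    then have "p i' (e i c) = 1" using gi(6) by simp
    ultimately show False by simp
  qed
  define oth :: "nat \<Rightarrow> nat" where "oth c = (if c = 1 then 2 else 1)" for c
  have oth: "oth c \<in> {1..k}" "oth c \<noteq> c" for c unfolding oth_def using k3 by auto
  define xg :: "gidx \<Rightarrow> nat" where
    "xg g = (case g of (i, c, i', c') \<Rightarrow> if c = c' then (if \<sigma> i' = c then oth c else c)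
                                         else (if \<sigma> i = c then c else c'))" for g
  define yg :: "gidx \<Rightarrow> nat" where
    "yg g = (case g of (i, c, i', c') \<Rightarrow> if c = c' then (if \<sigma> i' = c then c else oth c)
                                         else (if \<sigma> i = c then c else c'))" for g
  define LH :: "gidx \<Rightarrow> nat \<Rightarrow> nat" where
    "LH g = (case g of (i, c, i', c') \<Rightarrow> SOME h. permP (\<sigma> i) c (xg g) h)" for g
  define RH :: "gidx \<Rightarrow> nat \<Rightarrow> nat" where
    "RH g = (case g of (i, c, i', c') \<Rightarrow> SOME h. permP (\<sigma> i') c' (yg g) h)" for g
  have LHp: "permP (\<sigma> i) c (xg g) (LH g)" and RHp: "permP (\<sigma> i') c' (yg g) (RH g)"
    and xyne: "c = c' \<Longrightarrow> xg g \<noteq> yg g" and xy2: "c \<noteq> c' \<Longrightarrow> xg g = yg g"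
    if g: "g = (i, c, i', c')" "g \<in> gad" for g i c i' c'
  proof -
    have gi: "i \<in> I" "i' \<in> I" "c \<in> {1..k}" "c' \<in> {1..k}" using g gad_iff by auto
    have nc: "\<not> (\<sigma> i = c \<and> \<sigma> i' = c')" using noconf g by blast
    have x: "xg g \<in> {1..k}" "xg g = c \<or> \<sigma> i \<noteq> c" using gi oth nc unfolding g(1) xg_def by auto
    have y: "yg g \<in> {1..k}" "yg g = c' \<or> \<sigma> i' \<noteq> c'" using gi oth nc unfolding g(1) yg_def by auto
    show "permP (\<sigma> i) c (xg g) (LH g)"
      unfolding LH_def g(1) using permP_ex[OF conjunct1[OF sig[OF gi(1)]] gi(3) x] by (simp add: g(1))
    show "permP (\<sigma> i') c' (yg g) (RH g)"
      unfolding RH_def g(1) using permP_ex[OF conjunct1[OF sig[OF gi(2)]] gi(4) y] by (simp add: g(1))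
    show "c = c' \<Longrightarrow> xg g \<noteq> yg g" unfolding g(1) xg_def yg_def oth_def by auto
    show "c \<noteq> c' \<Longrightarrow> xg g = yg g" unfolding g(1) xg_def yg_def by auto
  qed
  define f :: "vert \<Rightarrow> nat" where
    "f v = (case v of Pig i \<Rightarrow> \<sigma> i | Lv g a \<Rightarrow> LH g a | Rv g a \<Rightarrow> RH g a
                 | Zv t \<Rightarrow> (t - 1) mod k + 1 | _ \<Rightarrow> 1)" for v
  have k0: "k > 0" using k3 by simp
  have fZ: "f (Zv t) \<in> {1..k}" for t
  proof -
    have "(t - 1) mod k < k" using k0 by simp
    then show ?thesis unfolding f_def by simp
  qed
  have fpre: "f (col x) = pcol x" if x: "x \<in> precol I e k" for x
  proof -
    obtain m where m: "zidx k os x = pcol x + k * m" "pcol x \<in> {1..k}"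
      using precol_zidx[OF x] by blast
    show ?thesis using col_precol[OF x] m mod_pre[OF m(2)] unfolding f_def by simp
  qed
  have fR: "f (col (Rv g a)) = RH g a" if g: "g = (i, c, i', c')" "g \<in> gad" for g i c i' c' a
  proof (cases "c \<noteq> c' \<and> a = k")
    case True
    have "f (col (Rv g a)) = LH g k" using True g(1) unfolding f_def by simp
    also have "\<dots> = xg g" using LHp[OF g] unfolding permP_def by simp
    also have "\<dots> = yg g" using xy2[OF g] True by simp
    also have "\<dots> = RH g k" using RHp[OF g] unfolding permP_def by simp
    finally show ?thesis using True by simp
  next
    case False
    then show ?thesis using g(1) unfolding f_def by auto
  qed
  have fL: "f (col (Lv g a)) = LH g a" for g a unfolding f_def by simp
  have fP: "f (col (Pig i)) = \<sigma> i" for i unfolding f_def by simp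
  have fZ': "f (col (Zv t)) = (t - 1) mod k + 1" for t unfolding f_def by simp
  show ?thesis
    unfolding k_colourable_def
  proof (intro exI[of _ f] conjI)
    show "\<forall>v\<in>V. f v \<in> {1..k}"
    proof
      fix v assume "v \<in> V"
      then obtain x where x: "x \<in> raw_verts I e k" "v = col x" unfolding G_verts_def by blast
      from x(1) show "f v \<in> {1..k}"
      proof (cases rule: raw_vert_cases)
        case (P i) then show ?thesis using x(2) fP sig by simp
      next
        case (L g a) then show ?thesis using x(2) fL LHp[of g] unfolding permP_def
          by (metis (no_types, lifting) image_subset_iff prod_cases4)
      next
        case (R g a) then show ?thesis using x(2) fR RHp[of g] unfolding permP_def
          by (metis (no_types, lifting) image_subset_iff prod_cases4)
      next
        case C then show ?thesis using x(2) fpre pcol_precol by simp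
      next
        case (Z t) then show ?thesis using x(2) fZ by simp
      qed
    qed
    have fe: "f (col x) \<noteq> f (col y)" if xy: "(x, y) \<in> raw_edges I e k" for x y
    proof
      assume eq: "f (col x) = f (col y)"
      have uv: "(col x, col y) = (col x, col y)" by simp
      from xy show False
      proof (cases rule: raw_edge_cases)
        case (Z a b t)
        have "(a - 1) mod k \<noteq> (b - 1) mod k" using Z by (intro mod_window) auto
        then show False using eq uv Z fZ' by simp
      next
        case (G g)
        obtain i c i' c' where g: "g = (i, c, i', c')" by (metis prod_cases4)
        have gg: "g = (i, c, i', c')" "g \<in> gad" using g G by auto
        have gi: "i \<in> I" "i' \<in> I" "c \<in> {1..k}" "c' \<in> {1..k}" using gg gad_iff by auto
        note LP = LHp[OF gg, unfolded permP_def] and RP = RHp[OF gg, unfolded permP_def]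
        from g G(2) show False
        proof (cases rule: gedge_cases)
          case (LL a b)
          have "LH g a \<noteq> LH g b" using LL LP inj_on_contraD[of "LH g" "{1..k}" a b] by auto
          then show False using eq uv LL fL by simp
        next
          case (RR a b)
          have "RH g a \<noteq> RH g b" using RR RP inj_on_contraD[of "RH g" "{1..k}" a b] by auto
          then show False using eq uv RR fR[OF gg] by simp
        next
          case PL then show False using eq uv fP fL LP by simp
        next
          case (CL a)
          have pr: "PLv g \<in> precol I e k" using gg unfolding precol_def by blast
          have "f (col (PLv g)) = c" using fpre[OF pr] g by simp
          then show False using eq uv CL fL LP by auto
        next
          case PR then show False using eq uv fP fR[OF gg] RP by simp
        next
          case (CR a)
          have pr: "PRv g \<in> precol I e k" using gg unfolding precol_def by blast
          have "f (col (PRv g)) = c'" using fpre[OF pr] g by simp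
          then show False using eq uv CR fR[OF gg] RP by auto
        next
          case LR
          then show False using eq uv fL fR[OF gg] LP RP xyne[OF gg] by simp
        qed
      qed
    qed
    then show "\<forall>(u, v)\<in>E. f u \<noteq> f v" unfolding G_edges_def by auto
  qed
qed

end


context php_setup begin

abbreviation "Hs j \<equiv> {i \<in> I. j \<in> N i}"

lemma card_sigma_bound:
  assumes i: "i \<in> I"
  shows "card (SIGMA c:{1..k}. Hs (e i c)) \<le> d * k * k"
proof -
  have "card (SIGMA c:{1..k}. Hs (e i c)) = (\<Sum>c\<in>{1..k}. card (Hs (e i c)))"
    by (rule card_SigmaI) (use finI in auto)
  also have "\<dots> \<le> (\<Sum>c\<in>{1..k}. d * k)"
  proof (rule sum_mono)
    fix c assume c: "c \<in> {1..k}"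
    have "e i c \<in> J" using e_in[OF i c] NJ i by blast
    then show "card (Hs (e i c)) \<le> d * k" using degJ by blast
  qed
  also have "\<dots> = d * k * k" by simp
  finally show ?thesis .
qed

lemma card_gad_fst: "card {g \<in> gad. fst g = i} \<le> d * k * k"
proof (cases "i \<in> I")
  case False
  then have "{g \<in> gad. fst g = i} = {}" unfolding gadgets_def by auto
  then show ?thesis by (metis card.empty le0)
next
  case i: True
  let ?\<phi> = "\<lambda>g::gidx. (fst (snd g), fst (snd (snd g)))"
  have inj: "inj_on ?\<phi> {g \<in> gad. fst g = i}"
  proof (rule inj_onI)
    fix g h assume g: "g \<in> {g \<in> gad. fst g = i}" and h: "h \<in> {g \<in> gad. fst g = i}" and eq: "?\<phi> g = ?\<phi> h"
    obtain a c i' c' where g': "g = (a, c, i', c')" by (metis prod_cases4)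
    obtain b c2 i2 c2' where h': "h = (b, c2, i2, c2')" by (metis prod_cases4)
    have gi: "a = i" "c2 = c" "i2 = i'" "b = i" using g h g' h' eq by auto
    have A: "e i' c' = e i c" "c' \<in> {1..k}" "i' \<in> I" using g g' gad_iff gi by auto
    have B: "e i' c2' = e i c" "c2' \<in> {1..k}" using h h' gad_iff gi by auto
    have "c' = c2'" using e_inj[OF A(3) A(2) B(2)] A(1) B(1) by simp
    then show "g = h" using g' h' gi by simp
  qed
  have sub: "?\<phi> ` {g \<in> gad. fst g = i} \<subseteq> (SIGMA c:{1..k}. Hs (e i c))"
  proof
    fix z assume "z \<in> ?\<phi> ` {g \<in> gad. fst g = i}"
    then obtain g where g: "g \<in> gad" "fst g = i" "z = ?\<phi> g" by blast
    obtain a c i' c' where g': "g = (a, c, i', c')" by (metis prod_cases4)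
    have A: "e i c = e i' c'" "c' \<in> {1..k}" "i' \<in> I" "c \<in> {1..k}" using g g' gad_iff by auto
    have "e i c \<in> N i'" using e_in[OF A(3) A(2)] A(1) by simp
    then show "z \<in> (SIGMA c:{1..k}. Hs (e i c))" using g g' A by auto
  qed
  have "card {g \<in> gad. fst g = i} = card (?\<phi> ` {g \<in> gad. fst g = i})" using card_image[OF inj] by simp
  also have "\<dots> \<le> card (SIGMA c:{1..k}. Hs (e i c))"
    by (rule card_mono[OF _ sub]) (use finI in auto)
  also have "\<dots> \<le> d * k * k" by (rule card_sigma_bound[OF i])
  finally show ?thesis .
qed

lemma card_gad_thd: "card {g \<in> gad. fst (snd (snd g)) = i} \<le> d * k * k"
proof (cases "i \<in> I")
  case False
  then have "{g \<in> gad. fst (snd (snd g)) = i} = {}" unfolding gadgets_def by auto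
  then show ?thesis by (metis card.empty le0)
next
  case i: True
  let ?\<phi> = "\<lambda>g::gidx. (snd (snd (snd g)), fst g)"
  have inj: "inj_on ?\<phi> {g \<in> gad. fst (snd (snd g)) = i}"
  proof (rule inj_onI)
    fix g h assume g: "g \<in> {g \<in> gad. fst (snd (snd g)) = i}" and h: "h \<in> {g \<in> gad. fst (snd (snd g)) = i}" and eq: "?\<phi> g = ?\<phi> h"
    obtain a c i' c' where g': "g = (a, c, i', c')" by (metis prod_cases4)
    obtain b c2 i2 c2' where h': "h = (b, c2, i2, c2')" by (metis prod_cases4)
    have gi: "i' = i" "c2' = c'" "i2 = i" "b = a" using g h g' h' eq by auto
    have A: "e a c = e i c'" "c \<in> {1..k}" "a \<in> I" using g g' gad_iff gi by auto
    have B: "e a c2 = e i c'" "c2 \<in> {1..k}" using h h' gad_iff gi by auto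
    have "c = c2" using e_inj[OF A(3) A(2) B(2)] A(1) B(1) by simp
    then show "g = h" using g' h' gi by simp
  qed
  have sub: "?\<phi> ` {g \<in> gad. fst (snd (snd g)) = i} \<subseteq> (SIGMA c:{1..k}. Hs (e i c))"
  proof
    fix z assume "z \<in> ?\<phi> ` {g \<in> gad. fst (snd (snd g)) = i}"
    then obtain g where g: "g \<in> gad" "fst (snd (snd g)) = i" "z = ?\<phi> g" by blast
    obtain a c i' c' where g': "g = (a, c, i', c')" by (metis prod_cases4)
    have A: "e a c = e i c'" "c' \<in> {1..k}" "a \<in> I" "c \<in> {1..k}" using g g' gad_iff by auto
    have "e i c' \<in> N a" using e_in[OF A(3) A(4)] A(1) by simp
    then show "z \<in> (SIGMA c:{1..k}. Hs (e i c))" using g g' A by auto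
  qed
  have "card {g \<in> gad. fst (snd (snd g)) = i} = card (?\<phi> ` {g \<in> gad. fst (snd (snd g)) = i})"
    using card_image[OF inj] by simp
  also have "\<dots> \<le> card (SIGMA c:{1..k}. Hs (e i c))"
    by (rule card_mono[OF _ sub]) (use finI in auto)
  also have "\<dots> \<le> d * k * k" by (rule card_sigma_bound[OF i])
  finally show ?thesis .
qed

lemma card_gad: "card gad \<le> card I * (d * k * k)"
proof -
  have "gad = (\<Union>i\<in>I. {g \<in> gad. fst g = i})" unfolding gadgets_def by auto
  then have "card gad = card (\<Union>i\<in>I. {g \<in> gad. fst g = i})" by simp
  also have "\<dots> \<le> (\<Sum>i\<in>I. card {g \<in> gad. fst g = i})"
    by (rule card_UN_le[OF finI])
  finally have "card gad \<le> (\<Sum>i\<in>I. card {g \<in> gad. fst g = i})" .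
  also have "\<dots> \<le> (\<Sum>i\<in>I. d * k * k)" by (rule sum_mono) (rule card_gad_fst)
  finally show ?thesis by simp
qed

lemma card_precol: "card (precol I e k) \<le> 2 * card gad"
proof -
  have "card (precol I e k) \<le> card (PLv ` gad) + card (PRv ` gad)"
    unfolding precol_def by (rule card_Un_le)
  also have "\<dots> \<le> card gad + card gad" by (intro add_mono card_image_le fin_gad)
  finally show ?thesis by simp
qed

lemma card_V: "card V \<le> (6 * d + 6) * k ^ 4 * card I"
proof -
  let ?A = "Pig ` I" and ?L = "{Lv g a | g a. g \<in> gad \<and> a \<in> {1..k}}"
    and ?R = "{Rv g a | g a. g \<in> gad \<and> a \<in> {1..k}}" and ?Z = "{Zv t | t. t \<in> {1..M}}"
  have L: "?L = (\<lambda>(g, a). Lv g a) ` (gad \<times> {1..k})" by auto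
  have R: "?R = (\<lambda>(g, a). Rv g a) ` (gad \<times> {1..k})" by auto
  have Z: "?Z = Zv ` {1..M}" by auto
  have cL: "card ?L \<le> card gad * k" unfolding L
    using card_image_le[of "gad \<times> {1..k}" "\<lambda>(g, a). Lv g a"] fin_gad by (simp add: card_cartesian_product)
  have cR: "card ?R \<le> card gad * k" unfolding R
    using card_image_le[of "gad \<times> {1..k}" "\<lambda>(g, a). Rv g a"] fin_gad by (simp add: card_cartesian_product)
  have cZ: "card ?Z \<le> M" unfolding Z using card_image_le[of "{1..M}" Zv] by simp
  have cA: "card ?A \<le> card I" using card_image_le[OF finI] by simp
  have fins: "finite ?A" "finite ?L" "finite ?R" "finite (precol I e k)" "finite ?Z"
    using finI fin_gad fin_precol L R Z by auto
  have "card V \<le> card (raw_verts I e k)" unfolding G_verts_def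
    by (rule card_image_le) (use fins in \<open>simp add: raw_verts_def\<close>)
  also have "\<dots> \<le> card ?A + card ?L + card ?R + card (precol I e k) + card ?Z"
  proof -
    have "card (?A \<union> ?L \<union> ?R \<union> precol I e k \<union> ?Z) \<le> card (?A \<union> ?L \<union> ?R \<union> precol I e k) + card ?Z"
      by (rule card_Un_le)
    moreover have "card (?A \<union> ?L \<union> ?R \<union> precol I e k) \<le> card (?A \<union> ?L \<union> ?R) + card (precol I e k)"
      by (rule card_Un_le)
    moreover have "card (?A \<union> ?L \<union> ?R) \<le> card (?A \<union> ?L) + card ?R"
      by (rule card_Un_le)
    moreover have "card (?A \<union> ?L) \<le> card ?A + card ?L"
      by (rule card_Un_le)
    ultimately show ?thesis unfolding raw_verts_def by linarith
  qed
  also have "\<dots> \<le> card I + card gad * k + card gad * k + 2 * card gad + k * (2 * card gad)"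
  proof -
    have "M \<le> k * (2 * card gad)" unfolding Mz_def using card_precol by simp
    then show ?thesis using cA cL cR cZ card_precol by linarith
  qed
  also have "\<dots> \<le> card I + 6 * k * card gad" using k3 by (simp add: algebra_simps)
  also have "\<dots> \<le> card I + 6 * k * (card I * (d * k * k))" using card_gad by simp
  also have "\<dots> = card I + 6 * d * k ^ 3 * card I" by (simp add: power3_eq_cube algebra_simps)
  also have "\<dots> \<le> k ^ 4 * card I + 6 * d * k ^ 4 * card I"
  proof -
    have "1 \<le> k ^ 4" using k3 by simp
    moreover have "k ^ 3 \<le> k ^ 4" using k3 by (simp add: power_increasing)
    ultimately show ?thesis by (intro add_mono) (simp_all add: mult_le_mono)
  qed
  also have "\<dots> \<le> (6 * d + 6) * k ^ 4 * card I" by (simp add: algebra_simps)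
  finally show ?thesis .
qed

end


context php_setup begin

definition Tg :: "gidx \<Rightarrow> vert set" where
  "Tg g = Lv g ` {1..k} \<union> Rv g ` {1..k} \<union> {Pig (fst g), Pig (fst (snd (snd g))),
           Zv (zidx k os (PLv g)), Zv (zidx k os (PRv g))}"

definition Tg' :: "gidx \<Rightarrow> vert set" where
  "Tg' g = Lv g ` {1..k} \<union> Rv g ` {1..k}"

definition gid :: "vert \<Rightarrow> gidx" where
  "gid x = (case x of PLv g \<Rightarrow> g | PRv g \<Rightarrow> g | _ \<Rightarrow> undefined)"

definition Sv :: "vert \<Rightarrow> vert set" where
  "Sv v = (case v of
      Pig i \<Rightarrow> (\<lambda>g. Lv g 1) ` {g \<in> gad. fst g = i} \<union> (\<lambda>g. Rv g 1) ` {g \<in> gad. fst (snd (snd g)) = i}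
    | Lv g a \<Rightarrow> Tg g
    | Rv g a \<Rightarrow> Tg g
    | Zv t \<Rightarrow> Zv ` {t - k..t + k} \<union> (\<Union>x \<in> {x \<in> precol I e k. zidx k os x = t}. Tg' (gid x))
    | _ \<Rightarrow> {})"

lemma colR: "col (Rv g a) \<in> {Rv g a, Lv g k}"
  by (cases g) auto

lemma Sv_R: "Sv (col (Rv g a)) = Tg g"
  using colR[of g a] unfolding Sv_def by auto

lemma Tg_R: "a \<in> {1..k} \<Longrightarrow> col (Rv g a) \<in> Tg g"
  using colR[of g a] k3 unfolding Tg_def by auto

lemma key_nb:
  assumes xy: "(x, y) \<in> raw_edges I e k"
  shows "col y \<in> Sv (col x) \<and> col x \<in> Sv (col y)"
  using xy
proof (cases rule: raw_edge_cases)
  case (Z a b t)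
  have "b \<in> {a - k..a + k}" "a \<in> {b - k..b + k}" using Z by auto
  then have "Zv b \<in> Zv ` {a - k..a + k}" "Zv a \<in> Zv ` {b - k..b + k}" by (auto intro: imageI)
  then show ?thesis unfolding Sv_def using Z by auto
next
  case (G g)
  obtain i c i' c' where g: "g = (i, c, i', c')" by (metis prod_cases4)
  from g G(2) show ?thesis
  proof (cases rule: gedge_cases)
    case (LL a b)
    then show ?thesis unfolding Sv_def Tg_def by auto
  next
    case (RR a b)
    then show ?thesis using Sv_R Tg_R by auto
  next
    case PL
    then show ?thesis using G(1) g unfolding Sv_def Tg_def by auto
  next
    case (CL a)
    have pr: "PLv g \<in> precol I e k" using G(1) unfolding precol_def by blast
    have "Lv g a \<in> Tg' (gid (PLv g))" using CL k3 unfolding Tg'_def gid_def by auto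
    then have "Lv g a \<in> Sv (Zv (zidx k os (PLv g)))" using pr unfolding Sv_def by auto
    moreover have "Zv (zidx k os (PLv g)) \<in> Sv (Lv g a)" unfolding Sv_def Tg_def by auto
    ultimately show ?thesis using CL by simp
  next
    case PR
    have "col (Rv g 1) = Rv g 1" using g k3 by simp
    then show ?thesis using G(1) g PR unfolding Sv_def Tg_def by auto
  next
    case (CR a)
    have pr: "PRv g \<in> precol I e k" using G(1) unfolding precol_def by blast
    have "a \<noteq> k" using CR k3 by linarith
    then have cr: "col (Rv g a) = Rv g a" using g by simp
    have "Rv g a \<in> Tg' (gid (PRv g))" using CR k3 unfolding Tg'_def gid_def by auto
    then have "Rv g a \<in> Sv (Zv (zidx k os (PRv g)))" using pr unfolding Sv_def by auto
    moreover have "Zv (zidx k os (PRv g)) \<in> Sv (Rv g a)" unfolding Sv_def Tg_def by auto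
    ultimately show ?thesis using CR cr by simp
  next
    case LR
    then show ?thesis using g k3 unfolding Sv_def Tg_def by auto
  qed
qed

lemma nb_sub: "{w. (v, w) \<in> E \<or> (w, v) \<in> E} \<subseteq> Sv v"
proof
  fix w assume "w \<in> {w. (v, w) \<in> E \<or> (w, v) \<in> E}"
  then consider "(v, w) \<in> E" | "(w, v) \<in> E" by blast
  then show "w \<in> Sv v"
  proof cases
    case 1
    then obtain z where z: "z \<in> raw_edges I e k" "(v, w) = (case z of (x, y) \<Rightarrow> (col x, col y))"
      unfolding G_edges_def by blast
    obtain x y where "z = (x, y)" by (cases z)
    then show ?thesis using key_nb z by auto
  next
    case 2
    then obtain z where z: "z \<in> raw_edges I e k" "(w, v) = (case z of (x, y) \<Rightarrow> (col x, col y))"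
      unfolding G_edges_def by blast
    obtain x y where "z = (x, y)" by (cases z)
    then show ?thesis using key_nb z by auto
  qed
qed

end

context php_setup begin
lemma Tg_card: "finite (Tg g) \<and> card (Tg g) \<le> 2 * k + 4"
proof -
  have "card (Lv g ` {1..k}) \<le> k" using card_image_le[of "{1..k}" "Lv g"] by simp
  moreover have "card (Rv g ` {1..k}) \<le> k" using card_image_le[of "{1..k}" "Rv g"] by simp
  moreover have "card {Pig (fst g), Pig (fst (snd (snd g))), Zv (zidx k os (PLv g)), Zv (zidx k os (PRv g))} \<le> 4"
    using card_length[of "[Pig (fst g), Pig (fst (snd (snd g))), Zv (zidx k os (PLv g)), Zv (zidx k os (PRv g))]"]
    by simp
  moreover have "card (Tg g) \<le> card (Lv g ` {1..k} \<union> Rv g ` {1..k}) + card {Pig (fst g), Pig (fst (snd (snd g))), Zv (zidx k os (PLv g)), Zv (zidx k os (PRv g))}"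
    unfolding Tg_def by (rule card_Un_le)
  moreover have "card (Lv g ` {1..k} \<union> Rv g ` {1..k}) \<le> card (Lv g ` {1..k}) + card (Rv g ` {1..k})"
    by (rule card_Un_le)
  ultimately show ?thesis unfolding Tg_def by auto
qed

lemma Tg'_card: "finite (Tg' g) \<and> card (Tg' g) \<le> 2 * k"
proof -
  have "card (Lv g ` {1..k}) \<le> k" using card_image_le[of "{1..k}" "Lv g"] by simp
  moreover have "card (Rv g ` {1..k}) \<le> k" using card_image_le[of "{1..k}" "Rv g"] by simp
  moreover have "card (Lv g ` {1..k} \<union> Rv g ` {1..k}) \<le> card (Lv g ` {1..k}) + card (Rv g ` {1..k})"
    by (rule card_Un_le)
  ultimately show ?thesis unfolding Tg'_def by auto
qed

lemma Pt_card: "card {x \<in> precol I e k. zidx k os x = t} \<le> 1"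
proof -
  have "\<forall>x \<in> {x \<in> precol I e k. zidx k os x = t}. \<forall>y \<in> {x \<in> precol I e k. zidx k os x = t}. x = y"
  proof (intro ballI, rule ccontr)
    fix x y assume x: "x \<in> {x \<in> precol I e k. zidx k os x = t}" and y: "y \<in> {x \<in> precol I e k. zidx k os x = t}"
      and ne: "x \<noteq> y"
    have "zidx k os x \<noteq> zidx k os y"
      using zidx_inj[OF dist, of x y k] x y ne setos pcol_precol by auto
    then show False using x y by simp
  qed
  then show ?thesis using fin_precol by (simp add: card_le_Suc0_iff_eq)
qed

lemma Sv_card: "finite (Sv v) \<and> card (Sv v) \<le> (6 * d + 6) * k ^ 2"
proof -
  have "3 * k \<le> k * k" using k3 by (rule mult_le_mono1)
  then have k2: "2 * k + 4 \<le> 6 * k ^ 2" "4 * k + 1 \<le> 6 * k ^ 2" using k3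
    unfolding power2_eq_square by linarith+
  have b: "6 * k ^ 2 \<le> (6 * d + 6) * k ^ 2" by simp
  show ?thesis
  proof (cases v)
    case (Pig i)
    have "card (Sv v) \<le> card ((\<lambda>g. Lv g 1) ` {g \<in> gad. fst g = i}) + card ((\<lambda>g. Rv g 1) ` {g \<in> gad. fst (snd (snd g)) = i})"
      unfolding Sv_def Pig by (simp add: card_Un_le)
    also have "\<dots> \<le> card {g \<in> gad. fst g = i} + card {g \<in> gad. fst (snd (snd g)) = i}"
      by (intro add_mono card_image_le) (use fin_gad in auto)
    also have "\<dots> \<le> d * k * k + d * k * k" by (rule add_mono[OF card_gad_fst card_gad_thd])
    also have "\<dots> \<le> (6 * d + 6) * k ^ 2" by (simp add: power2_eq_square algebra_simps)
    finally show ?thesis unfolding Sv_def Pig using fin_gad by simp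
  next
    case (Lv g a)
    have "card (Tg g) \<le> (6 * d + 6) * k ^ 2" using Tg_card[of g] k2(1) b by linarith
    then show ?thesis using Tg_card[of g] unfolding Sv_def Lv by simp
  next
    case (Rv g a)
    have "card (Tg g) \<le> (6 * d + 6) * k ^ 2" using Tg_card[of g] k2(1) b by linarith
    then show ?thesis using Tg_card[of g] unfolding Sv_def Rv by simp
  next
    case (Zv t)
    let ?P = "{x \<in> precol I e k. zidx k os x = t}"
    have fP: "finite ?P" using fin_precol by simp
    have c1: "card (Zv ` {t - k..t + k}) \<le> 2 * k + 1"
      using card_image_le[of "{t - k..t + k}" Zv] by simp
    have "card (\<Union>x \<in> ?P. Tg' (gid x)) \<le> (\<Sum>x \<in> ?P. card (Tg' (gid x)))"
      by (rule card_UN_le[OF fP])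
    also have "\<dots> \<le> (\<Sum>x \<in> ?P. 2 * k)" by (rule sum_mono) (use Tg'_card in blast)
    also have "\<dots> = card ?P * (2 * k)" by simp
    also have "\<dots> \<le> 2 * k" using Pt_card by simp
    finally have c2: "card (\<Union>x \<in> ?P. Tg' (gid x)) \<le> 2 * k" .
    have "card (Sv v) \<le> card (Zv ` {t - k..t + k}) + card (\<Union>x \<in> ?P. Tg' (gid x))"
      unfolding Sv_def Zv by (simp add: card_Un_le)
    also have "\<dots> \<le> 4 * k + 1" using c1 c2 by simp
    finally have "card (Sv v) \<le> (6 * d + 6) * k ^ 2" using k2 b by linarith
    moreover have "finite (Sv v)" unfolding Sv_def Zv using fP Tg'_card by auto
    ultimately show ?thesis by simp
  qed (simp_all add: Sv_def)
qed

lemma degree_bound: "vdegree E v \<le> (6 * d + 6) * k ^ 2"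
  unfolding vdegree_def using card_mono[OF conjunct1[OF Sv_card] nb_sub] Sv_card by (meson le_trans)

end

theorem proposition3p4:
  shows "\<forall>d :: nat. \<exists>C :: nat. \<forall>k I J N e os.
     k \<ge> 3 \<and> finite I \<and> finite J
     \<and> (\<forall>i \<in> I. N i \<subseteq> J \<and> card (N i) = k)
     \<and> (\<forall>j \<in> J. card {i \<in> I. j \<in> N i} \<le> d * k)
     \<and> (\<forall>i \<in> I. bij_betw (e i) {1..k} (N i))
     \<and> distinct os \<and> set os = precol I e k
     \<longrightarrow> card (G_verts I e k os) \<le> C * k ^ 4 * card I
       \<and> (\<forall>v \<in> G_verts I e k os. vdegree (G_edges I e k os) v \<le> C * k ^ 2)
       \<and> (k_colourable k (G_verts I e k os) (G_edges I e k os) \<longleftrightarrow> php_sat I N)"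
proof (intro allI)
  fix d :: nat
  show "\<exists>C :: nat. \<forall>k I J N e os.
     k \<ge> 3 \<and> finite I \<and> finite J
     \<and> (\<forall>i \<in> I. N i \<subseteq> J \<and> card (N i) = k)
     \<and> (\<forall>j \<in> J. card {i \<in> I. j \<in> N i} \<le> d * k)
     \<and> (\<forall>i \<in> I. bij_betw (e i) {1..k} (N i))
     \<and> distinct os \<and> set os = precol I e k
     \<longrightarrow> card (G_verts I e k os) \<le> C * k ^ 4 * card I
       \<and> (\<forall>v \<in> G_verts I e k os. vdegree (G_edges I e k os) v \<le> C * k ^ 2)
       \<and> (k_colourable k (G_verts I e k os) (G_edges I e k os) \<longleftrightarrow> php_sat I N)"
  proof (rule exI[of _ "6 * d + 6"], intro allI impI, elim conjE)
    fix k I J N e os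
    assume a: "k \<ge> 3" "finite I" "finite J" "\<forall>i \<in> I. N i \<subseteq> J \<and> card (N i) = k"
      "\<forall>j \<in> J. card {i \<in> I. j \<in> N i} \<le> d * k" "\<forall>i \<in> I. bij_betw (e i) {1..k} (N i)"
      "distinct os" "set os = precol I e k"
    interpret php_setup k I J N e os d
      using a by unfold_locales
    have c: "k_colourable k (G_verts I e k os) (G_edges I e k os) \<longleftrightarrow> php_sat I N"
    proof
      assume "k_colourable k (G_verts I e k os) (G_edges I e k os)"
      then obtain f where "\<forall>v \<in> G_verts I e k os. f v \<in> {1..k}" "\<forall>(u, v) \<in> G_edges I e k os. f u \<noteq> f v"
        unfolding k_colourable_def by blast
      then show "php_sat I N" by (rule col_to_php)
    next
      assume "php_sat I N"
      then show "k_colourable k (G_verts I e k os) (G_edges I e k os)" by (rule php_to_col)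
    qed
    show "card (G_verts I e k os) \<le> (6 * d + 6) * k ^ 4 * card I
       \<and> (\<forall>v \<in> G_verts I e k os. vdegree (G_edges I e k os) v \<le> (6 * d + 6) * k ^ 2)
       \<and> (k_colourable k (G_verts I e k os) (G_edges I e k os) \<longleftrightarrow> php_sat I N)"
      using card_V degree_bound c by blast
  qed
qed

end
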